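(* Let $q_1,q_2:\mathbb{R}\to[0,\infty)$ be even probability densities, $r_1,r_2:\mathbb{R}\to\mathbb{R}$ measurable, $A=\sum_i a_i|i\rangle\langle i|$ Hermitian on a finite-dimensional Hilbert space $\mathcal{H}$, $t_1,t_2\ge0$, and suppose $\int|r_m(p)|q_m(a_it_m-p)\,dp<\infty$ for $m=1,2$ and all eigenvalues $a_i$; put $s_m\coloneqq q_m*r_m$. Let $\rho$ be a density operator on $\mathcal{H}$, $|q_m\rangle\coloneqq\int dp\sqrt{q_m(p)}|p\rangle$, and $W\coloneqq e^{i\hat{x}_2\otimes At_2}e^{i\hat{x}_1\otimes At_1}$ acting on (mode 1)$\otimes$(mode 2)$\otimes\mathcal{H}$. Define the joint outcome density $$P(p_1,p_2)\coloneqq\operatorname{Tr}\!\left[(|p_1\rangle\langle p_1|\otimes|p_2\rangle\langle p_2|\otimes I)W(|q_1\rangle\langle q_1|\otimes|q_2\rangle\langle q_2|\otimes\rho)W^\dagger\right].$$ Then $$\int\!\!\int r_1(p_1)r_2(p_2)P(p_1,p_2)\,dp_1\,dp_2=\operatorname{Tr}\!\left[s_1(At_1)\,s_2(At_2)\,\rho\right].$$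
   Context: Each control qumode has Hilbert space $L^2(\mathbb{R})$ with generalized position/momentum eigenbases $\{|x\rangle\},\{|p\rangle\}$, $\langle x|p\rangle=e^{ipx}/\sqrt{2\pi}$; $\hat{x}_m$ is the position quadrature of mode $m$, and for Hermitian $B=\sum_ib_i|i\rangle\langle i|$, $e^{i\hat{x}_m\otimes B}=\sum_i\int dx\,e^{ixb_i}|x\rangle\langle x|_m\otimes|i\rangle\langle i|$. Convolution: $(f*g)(a)=\int f(a-p)g(p)\,dp$; $s_m(At_m)$ by functional calculus. *)

theory Defs
  imports "HOL-Analysis.Analysis"
begin

text \<open>The finite-dimensional Hilbert space H is C^n; operators on H are represented
  as n x n complex matrices, i.e. functions nat => nat => complex of which only the
  entries with indices < n are relevant.\<close>

type_synonym cmat = "nat \<Rightarrow> nat \<Rightarrow> complex"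

definition mmul :: "nat \<Rightarrow> cmat \<Rightarrow> cmat \<Rightarrow> cmat" where
  "mmul n M N = (\<lambda>i j. \<Sum>k<n. M i k * N k j)"

definition mtrace :: "nat \<Rightarrow> cmat \<Rightarrow> complex" where
  "mtrace n M = (\<Sum>i<n. M i i)"

definition orthonormal_basis :: "nat \<Rightarrow> cmat \<Rightarrow> bool" where
  "orthonormal_basis n U \<longleftrightarrow>
     (\<forall>i<n. \<forall>j<n. (\<Sum>k<n. cnj (U k i) * U k j) = (if i = j then 1 else 0))"

definition proj :: "cmat \<Rightarrow> nat \<Rightarrow> cmat" where
  "proj U i = (\<lambda>r c. U r i * cnj (U c i))"

definition fcalc :: "nat \<Rightarrow> (real \<Rightarrow> real) \<Rightarrow> (nat \<Rightarrow> real) \<Rightarrow> cmat \<Rightarrow> cmat" where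
  "fcalc n f b U = (\<lambda>r c. \<Sum>i<n. complex_of_real (f (b i)) * proj U i r c)"

definition spec_mat :: "nat \<Rightarrow> (nat \<Rightarrow> real) \<Rightarrow> cmat \<Rightarrow> cmat" where
  "spec_mat n b U = (\<lambda>r c. \<Sum>i<n. complex_of_real (b i) * proj U i r c)"

definition density_op :: "nat \<Rightarrow> cmat \<Rightarrow> bool" where
  "density_op n \<rho> \<longleftrightarrow>
     (\<forall>i<n. \<forall>j<n. \<rho> i j = cnj (\<rho> j i)) \<and>
     (\<forall>v :: nat \<Rightarrow> complex. Re (\<Sum>i<n. \<Sum>j<n. cnj (v i) * \<rho> i j * v j) \<ge> 0) \<and>
     mtrace n \<rho> = 1"

definition conv :: "(real \<Rightarrow> real) \<Rightarrow> (real \<Rightarrow> real) \<Rightarrow> real \<Rightarrow> real" where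
  "conv f g a = (LINT p|lborel. f (a - p) * g p)"

definition prob_density :: "(real \<Rightarrow> real) \<Rightarrow> bool" where
  "prob_density q \<longleftrightarrow> q \<in> borel_measurable borel \<and> (\<forall>x. q x \<ge> 0) \<and>
     (\<integral>\<^sup>+ x. ennreal (q x) \<partial>lborel) = 1"

text \<open>Operators on (mode 1) (x) (mode 2) (x) H are represented by their kernels in the
  generalized momentum basis: K p1 p2 p1' p2' is the H-operator
  (<p1| (x) <p2| (x) I) K (|p1'> (x) |p2'> (x) I).\<close>
type_synonym kernel = "real \<Rightarrow> real \<Rightarrow> real \<Rightarrow> real \<Rightarrow> cmat"

text \<open>With <x|p> = e^{ipx}/sqrt(2 pi), e^{i x b}|p> = |p + b>, hence for
  B = sum_i b_i|i><i| the controlled operator V = e^{i x_m (x) B}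
  = sum_i int dp |p + b_i><p|_m (x) |i><i|.
  ctrl1/ctrl2 give the kernel of V K V^dagger for V acting on mode 1 / mode 2.\<close>
definition ctrl1 :: "nat \<Rightarrow> (nat \<Rightarrow> real) \<Rightarrow> cmat \<Rightarrow> kernel \<Rightarrow> kernel" where
  "ctrl1 n b U K = (\<lambda>p1 p2 p1' p2'. \<lambda>r c. \<Sum>i<n. \<Sum>j<n.
      mmul n (mmul n (proj U i) (K (p1 - b i) p2 (p1' - b j) p2')) (proj U j) r c)"

definition ctrl2 :: "nat \<Rightarrow> (nat \<Rightarrow> real) \<Rightarrow> cmat \<Rightarrow> kernel \<Rightarrow> kernel" where
  "ctrl2 n b U K = (\<lambda>p1 p2 p1' p2'. \<lambda>r c. \<Sum>i<n. \<Sum>j<n.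
      mmul n (mmul n (proj U i) (K p1 (p2 - b i) p1' (p2' - b j))) (proj U j) r c)"

text \<open>Kernel of |q1><q1| (x) |q2><q2| (x) rho, where |q> = int dp sqrt(q p) |p>.\<close>
definition init_kernel :: "(real \<Rightarrow> real) \<Rightarrow> (real \<Rightarrow> real) \<Rightarrow> cmat \<Rightarrow> kernel" where
  "init_kernel q1 q2 \<rho> = (\<lambda>p1 p2 p1' p2'. \<lambda>r c.
      complex_of_real (sqrt (q1 p1) * sqrt (q2 p2) * sqrt (q1 p1') * sqrt (q2 p2')) * \<rho> r c)"

definition joint_density ::
  "nat \<Rightarrow> (nat \<Rightarrow> real) \<Rightarrow> cmat \<Rightarrow> real \<Rightarrow> real \<Rightarrow> (real \<Rightarrow> real) \<Rightarrow> (real \<Rightarrow> real)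
     \<Rightarrow> cmat \<Rightarrow> real \<Rightarrow> real \<Rightarrow> complex" where
  "joint_density n a U t1 t2 q1 q2 \<rho> p1 p2 =
     mtrace n (ctrl2 n (\<lambda>i. a i * t2) U (ctrl1 n (\<lambda>i. a i * t1) U (init_kernel q1 q2 \<rho>))
                p1 p2 p1 p2)"

end

theory Submission imports Defs begin

lemma mmul_assoc: "mmul n (mmul n A B) C = mmul n A (mmul n B C)"
  unfolding mmul_def by (auto simp: sum_distrib_left sum_distrib_right mult.assoc intro!: ext sum.swap[THEN trans] sum.cong)

lemma mmul_sum_left: "mmul n (\<lambda>r c. \<Sum>i\<in>I. f i r c) B = (\<lambda>r c. \<Sum>i\<in>I. mmul n (f i) B r c)"
  unfolding mmul_def by (auto simp: sum_distrib_right intro!: ext sum.swap)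

lemma mmul_sum_right: "mmul n A (\<lambda>r c. \<Sum>i\<in>I. f i r c) = (\<lambda>r c. \<Sum>i\<in>I. mmul n A (f i) r c)"
  unfolding mmul_def by (auto simp: sum_distrib_left intro!: ext sum.swap)

lemma mmul_scale_left: "mmul n (\<lambda>r c. \<alpha> * M r c) B = (\<lambda>r c. \<alpha> * mmul n M B r c)"
  unfolding mmul_def by (auto simp: sum_distrib_left mult.assoc)

lemma mmul_scale_right: "mmul n A (\<lambda>r c. \<alpha> * M r c) = (\<lambda>r c. \<alpha> * mmul n A M r c)"
  unfolding mmul_def by (auto simp: sum_distrib_left mult.assoc mult.left_commute)

lemma mmul_zero_left: "mmul n (\<lambda>r c. 0) B = (\<lambda>r c. 0)"
  unfolding mmul_def by auto

lemma mtrace_sum: "mtrace n (\<lambda>r c. \<Sum>i\<in>I. f i r c) = (\<Sum>i\<in>I. mtrace n (f i))"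
  unfolding mtrace_def by (rule sum.swap)

lemma mtrace_scale: "mtrace n (\<lambda>r c. \<alpha> * M r c) = \<alpha> * mtrace n M"
  unfolding mtrace_def by (simp add: sum_distrib_left)

lemma mtrace_comm: "mtrace n (mmul n A B) = mtrace n (mmul n B A)"
  unfolding mtrace_def mmul_def by (subst sum.swap) (simp add: mult.commute)

lemma proj_mul:
  assumes U: "orthonormal_basis n U" and "i < n" "j < n"
  shows "mmul n (proj U i) (proj U j) = (if i = j then proj U i else (\<lambda>r c. 0))"
proof -
  have "mmul n (proj U i) (proj U j) = (\<lambda>r c. U r i * cnj (U c j) * (\<Sum>k<n. cnj (U k i) * U k j))"
    unfolding mmul_def proj_def by (auto intro!: ext sum.cong simp: sum_distrib_left mult_ac)
  also have "\<dots> = (if i = j then proj U i else (\<lambda>r c. 0))"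
    using U assms unfolding orthonormal_basis_def proj_def by auto
  finally show ?thesis .
qed

lemma trace_PXP:
  assumes U: "orthonormal_basis n U" and "k < n" "l < n"
  shows "mtrace n (mmul n (mmul n (proj U k) X) (proj U l)) = (if k = l then mtrace n (mmul n (proj U k) X) else 0)"
proof -
  have "mtrace n (mmul n (mmul n (proj U k) X) (proj U l)) = mtrace n (mmul n (mmul n (proj U l) (proj U k)) X)"
    using mtrace_comm[of n "mmul n (proj U k) X" "proj U l"] by (simp add: mmul_assoc)
  also have "\<dots> = (if k = l then mtrace n (mmul n (proj U k) X) else 0)"
    using proj_mul[OF U assms(3,2)] by (auto simp: mmul_zero_left mtrace_def)
  finally show ?thesis .
qed

lemma trace_PPXP:
  assumes U: "orthonormal_basis n U" and "k < n" "i < n" "j < n"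
  shows "mtrace n (mmul n (proj U k) (mmul n (mmul n (proj U i) X) (proj U j))) =
     (if k = i \<and> i = j then mtrace n (mmul n (proj U i) X) else 0)"
proof -
  have "mmul n (proj U k) (mmul n (mmul n (proj U i) X) (proj U j)) = mmul n (mmul n (mmul n (proj U k) (proj U i)) X) (proj U j)" (is "_ = ?r")
    by (simp add: mmul_assoc)
  note eq = this
  show ?thesis
  proof (cases "k = i")
    case True
    then show ?thesis unfolding eq using proj_mul[OF U assms(2,3)] trace_PXP[OF U assms(3,4)] by simp
  next
    case False
    then show ?thesis unfolding eq using proj_mul[OF U assms(2,3)]
      by (simp add: mmul_zero_left) (simp add: mtrace_def mmul_def)
  qed
qed

lemma mtrace_sum2: "mtrace n (\<lambda>r c. \<Sum>k\<in>I. \<Sum>l\<in>J. g k l r c) = (\<Sum>k\<in>I. \<Sum>l\<in>J. mtrace n (g k l))"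
  by (simp add: mtrace_sum)

lemma mmul_sum2_right: "mmul n A (\<lambda>r c. \<Sum>k\<in>I. \<Sum>l\<in>J. g k l r c) = (\<lambda>r c. \<Sum>k\<in>I. \<Sum>l\<in>J. mmul n A (g k l) r c)"
  by (simp add: mmul_sum_right)

lemma joint_pointwise:
  assumes U: "orthonormal_basis n U" and q1: "\<And>x. q1 x \<ge> 0" and q2: "\<And>x. q2 x \<ge> 0"
  shows "joint_density n a U t1 t2 q1 q2 \<rho> p1 p2 =
    (\<Sum>i<n. complex_of_real (q1 (p1 - a i * t1) * q2 (p2 - a i * t2)) * mtrace n (mmul n (proj U i) \<rho>))"
proof -
  define b where "b = (\<lambda>i. a i * t1)"
  define c where "c = (\<lambda>i. a i * t2)"
  define K0 where "K0 = init_kernel q1 q2 \<rho>"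
  define K1 where "K1 = ctrl1 n b U K0"
  define \<alpha> where "\<alpha> = (\<lambda>k i j. complex_of_real (sqrt (q1 (p1 - b i)) * sqrt (q2 (p2 - c k)) * sqrt (q1 (p1 - b j)) * sqrt (q2 (p2 - c k))))"
  have K1kk: "K1 p1 (p2 - c k) p1 (p2 - c k) = (\<lambda>r cc. \<Sum>i<n. \<Sum>j<n. \<alpha> k i j * mmul n (mmul n (proj U i) \<rho>) (proj U j) r cc)" for k
    unfolding K1_def ctrl1_def K0_def init_kernel_def \<alpha>_def
    by (simp add: mmul_scale_left mmul_scale_right)
  have "joint_density n a U t1 t2 q1 q2 \<rho> p1 p2 = (\<Sum>k<n. \<Sum>l<n. mtrace n (mmul n (mmul n (proj U k) (K1 p1 (p2 - c k) p1 (p2 - c l))) (proj U l)))"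
    unfolding joint_density_def b_def[symmetric] c_def[symmetric] K0_def[symmetric] K1_def[symmetric]
    unfolding ctrl2_def by (simp add: mtrace_sum2)
  also have "\<dots> = (\<Sum>k<n. mtrace n (mmul n (proj U k) (K1 p1 (p2 - c k) p1 (p2 - c k))))"
    by (rule sum.cong) (simp_all add: trace_PXP[OF U])
  also have "\<dots> = (\<Sum>k<n. \<Sum>i<n. \<Sum>j<n. \<alpha> k i j * mtrace n (mmul n (proj U k) (mmul n (mmul n (proj U i) \<rho>) (proj U j))))"
    unfolding K1kk by (simp add: mmul_sum2_right mmul_scale_right mtrace_sum2 mtrace_scale)
  also have "\<dots> = (\<Sum>k<n. \<alpha> k k k * mtrace n (mmul n (proj U k) \<rho>))"
  proof (rule sum.cong[OF refl])
    fix k assume k: "k \<in> {..<n}"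
    have "(\<Sum>i<n. \<Sum>j<n. \<alpha> k i j * mtrace n (mmul n (proj U k) (mmul n (mmul n (proj U i) \<rho>) (proj U j))))
       = (\<Sum>i<n. if i = k then (\<Sum>j<n. if j = k then \<alpha> k k k * mtrace n (mmul n (proj U k) \<rho>) else 0) else 0)"
    proof (rule sum.cong[OF refl])
      fix i assume i: "i \<in> {..<n}"
      show "(\<Sum>j<n. \<alpha> k i j * mtrace n (mmul n (proj U k) (mmul n (mmul n (proj U i) \<rho>) (proj U j))))
        = (if i = k then (\<Sum>j<n. if j = k then \<alpha> k k k * mtrace n (mmul n (proj U k) \<rho>) else 0) else 0)"
      proof (cases "i = k")
        case True
        have "(\<Sum>j<n. \<alpha> k i j * mtrace n (mmul n (proj U k) (mmul n (mmul n (proj U i) \<rho>) (proj U j))))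
          = (\<Sum>j<n. if j = k then \<alpha> k k k * mtrace n (mmul n (proj U k) \<rho>) else 0)"
          using True k by (intro sum.cong refl) (auto simp: trace_PPXP[OF U])
        then show ?thesis using True by simp
      next
        case False
        then show ?thesis using k i by (simp add: trace_PPXP[OF U])
      qed
    qed
    also have "\<dots> = \<alpha> k k k * mtrace n (mmul n (proj U k) \<rho>)"
      using k by simp
    finally show "(\<Sum>i<n. \<Sum>j<n. \<alpha> k i j * mtrace n (mmul n (proj U k) (mmul n (mmul n (proj U i) \<rho>) (proj U j)))) = \<alpha> k k k * mtrace n (mmul n (proj U k) \<rho>)" .
  qed
  also have "\<dots> = (\<Sum>i<n. complex_of_real (q1 (p1 - a i * t1) * q2 (p2 - a i * t2)) * mtrace n (mmul n (proj U i) \<rho>))"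
  proof (rule sum.cong[OF refl])
    fix k
    have "sqrt (q1 (p1 - b k)) * sqrt (q2 (p2 - c k)) * sqrt (q1 (p1 - b k)) * sqrt (q2 (p2 - c k))
      = (sqrt (q1 (p1 - b k)) * sqrt (q1 (p1 - b k))) * (sqrt (q2 (p2 - c k)) * sqrt (q2 (p2 - c k)))"
      by (simp add: mult_ac)
    also have "\<dots> = q1 (p1 - a k * t1) * q2 (p2 - a k * t2)"
      using q1 q2 by (simp add: b_def c_def)
    finally show "\<alpha> k k k * mtrace n (mmul n (proj U k) \<rho>) = complex_of_real (q1 (p1 - a k * t1) * q2 (p2 - a k * t2)) * mtrace n (mmul n (proj U k) \<rho>)"
      unfolding \<alpha>_def by simp
  qed
  finally show ?thesis .
qed

lemma rhs_eq:
  assumes U: "orthonormal_basis n U"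
  shows "mtrace n (mmul n (mmul n (fcalc n f b U) (fcalc n g c U)) \<rho>) =
    (\<Sum>i<n. complex_of_real (f (b i) * g (c i)) * mtrace n (mmul n (proj U i) \<rho>))"
proof -
  have "mmul n (fcalc n f b U) (fcalc n g c U) = (\<lambda>r cc. \<Sum>i<n. \<Sum>j<n. complex_of_real (f (b i)) * (complex_of_real (g (c j)) * mmul n (proj U i) (proj U j) r cc))"
    unfolding fcalc_def by (simp add: mmul_sum_left mmul_sum_right mmul_scale_left mmul_scale_right)
  also have "\<dots> = (\<lambda>r cc. \<Sum>i<n. complex_of_real (f (b i) * g (c i)) * proj U i r cc)"
  proof (intro ext sum.cong refl)
    fix r cc i assume i: "i \<in> {..<n}"
    have "(\<Sum>j<n. complex_of_real (f (b i)) * (complex_of_real (g (c j)) * mmul n (proj U i) (proj U j) r cc))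
      = (\<Sum>j<n. if j = i then complex_of_real (f (b i)) * (complex_of_real (g (c i)) * proj U i r cc) else 0)"
      using i by (intro sum.cong refl) (auto simp: proj_mul[OF U])
    also have "\<dots> = complex_of_real (f (b i) * g (c i)) * proj U i r cc" using i by simp
    finally show "(\<Sum>j<n. complex_of_real (f (b i)) * (complex_of_real (g (c j)) * mmul n (proj U i) (proj U j) r cc))
      = complex_of_real (f (b i) * g (c i)) * proj U i r cc" .
  qed
  finally show ?thesis
    by (simp add: mmul_sum_left mmul_scale_left mtrace_sum mtrace_scale)
qed

lemma integ_aux:
  fixes q r :: "real \<Rightarrow> real"
  assumes q: "prob_density q" and qe: "\<And>x. q (- x) = q x" and r: "r \<in> borel_measurable borel"
    and fin: "(\<integral>\<^sup>+ p. ennreal (\<bar>r p\<bar> * q (b - p)) \<partial>lborel) < \<infinity>"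
  shows "integrable lborel (\<lambda>p. r p * q (p - b))"
    and "(LINT p|lborel. r p * q (p - b)) = conv q r b"
proof -
  have qm: "q \<in> borel_measurable borel" and q0: "\<And>x. q x \<ge> 0" using q unfolding prob_density_def by auto
  have qs: "q (p - b) = q (b - p)" for p using qe[of "b - p"] by simp
  have "(\<lambda>p. r p * q (p - b)) \<in> borel_measurable lborel" using qm r by measurable
  moreover have "(\<integral>\<^sup>+ p. ennreal (norm (r p * q (p - b))) \<partial>lborel) < \<infinity>"
    using fin by (simp add: qs abs_mult q0)
  ultimately show "integrable lborel (\<lambda>p. r p * q (p - b))" by (rule integrableI_bounded)
  show "(LINT p|lborel. r p * q (p - b)) = conv q r b"
    unfolding conv_def by (simp add: qs mult.commute)
qed

theorem theorem9:
  fixes n :: nat and a :: "nat \<Rightarrow> real" and U A \<rho> :: cmat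
    and q1 q2 r1 r2 :: "real \<Rightarrow> real" and t1 t2 :: real
  assumes q1: "prob_density q1" and q1_even: "\<And>x. q1 (- x) = q1 x"
    and q2: "prob_density q2" and q2_even: "\<And>x. q2 (- x) = q2 x"
    and r1: "r1 \<in> borel_measurable borel" and r2: "r2 \<in> borel_measurable borel"
    and U: "orthonormal_basis n U" and A: "A = spec_mat n a U"
    and t1: "t1 \<ge> 0" and t2: "t2 \<ge> 0"
    and int1: "\<And>i. i < n \<Longrightarrow> (\<integral>\<^sup>+ p. ennreal (\<bar>r1 p\<bar> * q1 (a i * t1 - p)) \<partial>lborel) < \<infinity>"
    and int2: "\<And>i. i < n \<Longrightarrow> (\<integral>\<^sup>+ p. ennreal (\<bar>r2 p\<bar> * q2 (a i * t2 - p)) \<partial>lborel) < \<infinity>"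
    and rho: "density_op n \<rho>"
  shows "(LINT p2|lborel. LINT p1|lborel.
            complex_of_real (r1 p1 * r2 p2) * joint_density n a U t1 t2 q1 q2 \<rho> p1 p2)
         = mtrace n (mmul n (mmul n (fcalc n (conv q1 r1) (\<lambda>i. a i * t1) U)
                                   (fcalc n (conv q2 r2) (\<lambda>i. a i * t2) U)) \<rho>)"
proof -
  have q1p: "\<And>x. q1 x \<ge> 0" and q2p: "\<And>x. q2 x \<ge> 0" using q1 q2 unfolding prob_density_def by auto
  define w where "w = (\<lambda>i. mtrace n (mmul n (proj U i) \<rho>))"
  define f where "f = (\<lambda>i p. r1 p * q1 (p - a i * t1))"
  define g where "g = (\<lambda>i p. r2 p * q2 (p - a i * t2))"
  have fi: "integrable lborel (f i)" and fc: "(LINT p|lborel. f i p) = conv q1 r1 (a i * t1)" if "i < n" for i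
    using integ_aux[OF q1 q1_even r1 int1[OF that]] unfolding f_def by auto
  have gi: "integrable lborel (g i)" and gc: "(LINT p|lborel. g i p) = conv q2 r2 (a i * t2)" if "i < n" for i
    using integ_aux[OF q2 q2_even r2 int2[OF that]] unfolding g_def by auto
  have inner: "(LINT p1|lborel. complex_of_real (r1 p1 * r2 p2) * joint_density n a U t1 t2 q1 q2 \<rho> p1 p2)
     = (\<Sum>i<n. complex_of_real (g i p2) * (complex_of_real (conv q1 r1 (a i * t1)) * w i))" for p2
  proof -
    have "(LINT p1|lborel. complex_of_real (r1 p1 * r2 p2) * joint_density n a U t1 t2 q1 q2 \<rho> p1 p2)
      = (LINT p1|lborel. (\<Sum>i<n. complex_of_real (f i p1) * (complex_of_real (g i p2) * w i)))"
      unfolding joint_pointwise[OF U q1p q2p] w_def f_def g_def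
      by (simp add: sum_distrib_left mult_ac)
    also have "\<dots> = (\<Sum>i<n. complex_of_real (LINT p1|lborel. f i p1) * (complex_of_real (g i p2) * w i))"
      using fi by (simp add: integral_sum)
    also have "\<dots> = (\<Sum>i<n. complex_of_real (g i p2) * (complex_of_real (conv q1 r1 (a i * t1)) * w i))"
      using fc by (simp add: mult_ac)
    finally show ?thesis .
  qed
  have "(LINT p2|lborel. LINT p1|lborel. complex_of_real (r1 p1 * r2 p2) * joint_density n a U t1 t2 q1 q2 \<rho> p1 p2)
     = (\<Sum>i<n. complex_of_real (LINT p2|lborel. g i p2) * (complex_of_real (conv q1 r1 (a i * t1)) * w i))"
    unfolding inner using gi by (simp add: integral_sum)
  also have "\<dots> = (\<Sum>i<n. complex_of_real (conv q1 r1 (a i * t1) * conv q2 r2 (a i * t2)) * w i)"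
    using gc by (simp add: mult_ac)
  also have "\<dots> = mtrace n (mmul n (mmul n (fcalc n (conv q1 r1) (\<lambda>i. a i * t1) U)
                                   (fcalc n (conv q2 r2) (\<lambda>i. a i * t2) U)) \<rho>)"
    unfolding rhs_eq[OF U] w_def by simp
  finally show ?thesis .
qed

end
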